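(* For every instance of the box problem with an exogenous ordering, there is a $\kappa$-thresholding policy whose expected net value is at least half of the supremum of the expected net values of all sequential search procedures for the same boxes that may open boxes in any adaptively chosen order and claim the prize from any opened box (i.e. at least half the expected net value of Weitzman's optimal search procedure).
   Context: Box problem: there are boxes $1,\ldots,m$. Box $i$ contains an independent non-negative random prize $v_i$ and has opening cost $c_i\ge 0$. A sequential search procedure opens boxes one at a time (adaptively), paying $c_i$ to open box $i$ and observing $v_i$. It may stop at any time and claim the prize of at most one opened box. Its net value is the claimed prize (or $0$) minus the total cost of opened boxes. The priority $z_i$ of box $i$ is defined by $\mathbb{E}[(v_i-z_i)^+]=c_i$ (assumed well-defined). The covered call value is $\kappa_i=\min\{v_i,z_i\}$. In the box problem with an exogenous ordering, the searcher must consider the boxes one by one in the given order $1,\ldots,m$. For each box she decides whether to open it, and if she opens it, whether to claim its prize (and stop). Once a box is skipped or its prize is left unclaimed, she cannot return to it. A $\kappa$-thresholding policy with target interval $X=(\theta,\infty)$ or $X=[\theta,\infty)$ is the exogenous-order policy that declines to open every box $i$ with $z_i\notin X$. For a box with $z_i\in X$, it opens the box and claims the prize if and only if $v_i\in X$. *)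

theory Defs
  imports "HOL-Probability.Probability"
begin

text \<open>Boxes are indexed by natural numbers i < m (box i here is box i+1 of the paper).
  An outcome is a vector of prizes  w :: nat => real  (w i = prize of box i).\<close>

text \<open>Actions of a general (adaptive, free-order) sequential search procedure:
  open box i, or stop and claim the prize of box j (Some j) or nothing (None).\<close>
datatype action = Open nat | Stop "nat option"

text \<open>A deterministic adaptive search procedure: chooses the next action from the
  history (list of opened boxes together with the observed prizes).\<close>
type_synonym search_policy = "(nat \<times> real) list \<Rightarrow> action"

definition claim_value :: "(nat \<times> real) list \<Rightarrow> (nat \<Rightarrow> real) \<Rightarrow> nat option \<Rightarrow> real" where
  "claim_value h w a = (case a of None \<Rightarrow> 0
      | Some j \<Rightarrow> (if j \<in> fst ` set h then w j else 0))"

text \<open>Invalid actions (re-opening or opening a non-existing box)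
  are treated as stopping without claiming anything.\<close>
fun search_run :: "nat \<Rightarrow> (nat \<Rightarrow> real) \<Rightarrow> search_policy \<Rightarrow> (nat \<Rightarrow> real) \<Rightarrow> nat
      \<Rightarrow> (nat \<times> real) list \<Rightarrow> real" where
  "search_run m c s w 0 h = (case s h of Stop a \<Rightarrow> claim_value h w a | Open i \<Rightarrow> 0)"
| "search_run m c s w (Suc k) h = (case s h of
       Stop a \<Rightarrow> claim_value h w a
     | Open i \<Rightarrow> (if i < m \<and> i \<notin> fst ` set h
                  then - c i + search_run m c s w k (h @ [(i, w i)]) else 0))"

definition search_value :: "nat \<Rightarrow> (nat \<Rightarrow> real) \<Rightarrow> search_policy \<Rightarrow> (nat \<Rightarrow> real) \<Rightarrow> real" where
  "search_value m c s w = search_run m c s w m []"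

definition opt_search_value :: "nat \<Rightarrow> (nat \<Rightarrow> real measure) \<Rightarrow> (nat \<Rightarrow> real) \<Rightarrow> real" where
  "opt_search_value m M c =
     (SUP s \<in> {s. integrable (PiM {..<m} M) (search_value m c s)}.
        \<integral>w. search_value m c s w \<partial>PiM {..<m} M)"

definition target_interval :: "real set \<Rightarrow> bool" where
  "target_interval X \<longleftrightarrow> (\<exists>\<theta>. X = {\<theta><..} \<or> X = {\<theta>..})"

text \<open>Net value of the kappa-thresholding policy with target X, considering the boxes
  in the exogenous order given by the list (here [0..<m]).\<close>
fun threshold_run :: "(nat \<Rightarrow> real) \<Rightarrow> (nat \<Rightarrow> real) \<Rightarrow> real set \<Rightarrow> nat list
      \<Rightarrow> (nat \<Rightarrow> real) \<Rightarrow> real" where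
  "threshold_run c z X [] w = 0"
| "threshold_run c z X (i # is) w =
     (if z i \<in> X then - c i + (if w i \<in> X then w i else threshold_run c z X is w)
      else threshold_run c z X is w)"

definition threshold_value :: "nat \<Rightarrow> (nat \<Rightarrow> real measure) \<Rightarrow> (nat \<Rightarrow> real) \<Rightarrow> (nat \<Rightarrow> real)
      \<Rightarrow> real set \<Rightarrow> real" where
  "threshold_value m M c z X = (\<integral>w. threshold_run c z X [0..<m] w \<partial>PiM {..<m} M)"

end

theory Submission
  imports Defs
begin


lemma fubini_insert:
  fixes f :: "(nat \<Rightarrow> real) \<Rightarrow> real"
  assumes PI: "\<forall>j\<in>I. prob_space (M j)" and Pi: "prob_space (M i)"
    and f: "integrable (PiM (insert i I) M) f"
  shows "AE a in M i. integrable (PiM I M) (\<lambda>y. f (y(i:=a)))"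
    and "integrable (M i) (\<lambda>a. \<integral>y. f (y(i:=a)) \<partial>PiM I M)"
    and "integral\<^sup>L (PiM (insert i I) M) f = (\<integral>a. (\<integral>y. f (y(i:=a)) \<partial>PiM I M) \<partial>M i)"
proof -
  interpret A: prob_space "M i" by (rule Pi)
  interpret B: prob_space "PiM I M" by (rule prob_space_PiM) (use PI in auto)
  interpret P: pair_sigma_finite "M i" "PiM I M"
    by (intro pair_sigma_finite.intro A.sigma_finite_measure_axioms B.sigma_finite_measure_axioms)
  have meas: "(\<lambda>(x,X). X(i:=x)) \<in> measurable (M i \<Otimes>\<^sub>M PiM I M) (PiM (insert i I) M)"
    by measurable
  have D: "distr (M i \<Otimes>\<^sub>M PiM I M) (PiM (insert i I) M) (\<lambda>(x,X). X(i:=x)) = PiM (insert i I) M"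
    by (rule distr_pair_PiM_eq_PiM) (use PI Pi in auto)
  have fm: "f \<in> borel_measurable (PiM (insert i I) M)" using f by auto
  have int2: "integrable (M i \<Otimes>\<^sub>M PiM I M) (\<lambda>(x,X). f (X(i:=x)))"
    using integrable_distr[OF meas, of f] f D by (simp add: case_prod_beta')
  show "AE a in M i. integrable (PiM I M) (\<lambda>y. f (y(i:=a)))"
    using P.AE_integrable_fst[of "\<lambda>x X. f (X(i:=x))"] int2 by simp
  show "integrable (M i) (\<lambda>a. \<integral>y. f (y(i:=a)) \<partial>PiM I M)"
    using P.integrable_fst[of "\<lambda>x X. f (X(i:=x))"] int2 by simp
  have "integral\<^sup>L (PiM (insert i I) M) f = integral\<^sup>L (M i \<Otimes>\<^sub>M PiM I M) (\<lambda>x. f ((\<lambda>(x,X). X(i:=x)) x))"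
    by (subst D[symmetric], rule integral_distr[OF meas fm])
  also have "\<dots> = (\<integral>a. (\<integral>y. f (y(i:=a)) \<partial>PiM I M) \<partial>M i)"
    using P.integral_fst[of "\<lambda>x X. f (X(i:=x))"] int2 by (simp add: case_prod_beta')
  finally show "integral\<^sup>L (PiM (insert i I) M) f = (\<integral>a. (\<integral>y. f (y(i:=a)) \<partial>PiM I M) \<partial>M i)" .
qed

definition hmerge :: "(nat \<times> real) list \<Rightarrow> (nat \<Rightarrow> real) \<Rightarrow> nat \<Rightarrow> real" where
  "hmerge h w j = (case map_of h j of Some v \<Rightarrow> v | None \<Rightarrow> w j)"

definition bh :: "(nat \<times> real) list \<Rightarrow> real" where
  "bh h = Max (insert 0 (snd ` set h))"

definition Phi :: "(nat \<Rightarrow> real) \<Rightarrow> (nat \<times> real) list \<Rightarrow> nat set \<Rightarrow> (nat \<Rightarrow> real) \<Rightarrow> real" where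
  "Phi z h U w = Max (insert (bh h) ((\<lambda>j. min (w j) (z j)) ` U))"

lemma Max_insert_gen: "finite K \<Longrightarrow> Max (insert (b::real) K) = (if K = {} then b else max b (Max K))"
  by (simp add: Max_insert)

lemma bh_nonneg: "0 \<le> bh h"
  unfolding bh_def by (rule Max_ge) auto

lemma bh_snoc: "bh (h @ [(i, v)]) = max (bh h) v"
proof -
  have "bh (h @ [(i, v)]) = Max (insert v (insert 0 (snd ` set h)))"
    unfolding bh_def by (simp add: insert_commute)
  also have "\<dots> = max v (bh h)" unfolding bh_def by (subst Max_insert) auto
  finally show ?thesis by simp
qed

lemma Phi_ge_bh: "finite U \<Longrightarrow> bh h \<le> Phi z h U w"
  unfolding Phi_def by (rule Max_ge) auto

lemma Phi_snoc: "finite I \<Longrightarrow> Phi z (h @ [(i, v)]) I y = max v (Phi z h I y)"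
  unfolding Phi_def bh_snoc by (simp add: Max_insert_gen max.assoc max.commute max.left_commute)

lemma Phi_upd: "finite I \<Longrightarrow> i \<notin> I \<Longrightarrow> Phi z h (insert i I) (y(i:=a)) = max (min a (z i)) (Phi z h I y)"
proof -
  assume fI: "finite I" and iI: "i \<notin> I"
  have "(\<lambda>j. min ((y(i:=a)) j) (z j)) ` (insert i I) = insert (min a (z i)) ((\<lambda>j. min (y j) (z j)) ` I)"
    using iI by (auto intro!: image_cong)
  then have "Phi z h (insert i I) (y(i:=a)) = Max (insert (min a (z i)) (insert (bh h) ((\<lambda>j. min (y j) (z j)) ` I)))"
    unfolding Phi_def by (simp add: insert_commute)
  also have "\<dots> = max (min a (z i)) (Phi z h I y)"
    unfolding Phi_def using fI by (subst Max_insert) auto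
  finally show ?thesis .
qed

lemma claim_le_bh: "claim_value h (hmerge h w) a \<le> bh h"
proof (cases a)
  case None then show ?thesis by (simp add: claim_value_def bh_nonneg)
next
  case (Some j)
  show ?thesis
  proof (cases "j \<in> fst ` set h")
    case True
    then obtain v where v: "map_of h j = Some v"
      by (metis map_of_eq_None_iff not_None_eq)
    then have "(j, v) \<in> set h" by (rule map_of_SomeD)
    then have "v \<le> bh h" unfolding bh_def by (intro Max_ge) force+
    then show ?thesis using True v Some by (simp add: claim_value_def hmerge_def)
  next
    case False then show ?thesis using Some by (simp add: claim_value_def bh_nonneg)
  qed
qed

lemma Max_ins_bound:
  fixes f :: "nat \<Rightarrow> real"
  assumes "finite S"
  shows "\<bar>Max (insert b (f ` S))\<bar> \<le> \<bar>b\<bar> + (\<Sum>j\<in>S. \<bar>f j\<bar>)"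
proof -
  have "Max (insert b (f ` S)) \<in> insert b (f ` S)" using assms by (intro Max_in) auto
  then show ?thesis
  proof
    assume "Max (insert b (f ` S)) = b" then show ?thesis by (simp add: sum_nonneg)
  next
    assume "Max (insert b (f ` S)) \<in> f ` S"
    then obtain j where j: "j \<in> S" "Max (insert b (f ` S)) = f j" by auto
    have "\<bar>f j\<bar> \<le> (\<Sum>j\<in>S. \<bar>f j\<bar>)" using j assms by (intro member_le_sum) auto
    then show ?thesis using j by simp
  qed
qed

lemma Max_ins_meas:
  fixes g :: "nat \<Rightarrow> 'a \<Rightarrow> real"
  assumes "finite S" "\<And>j. j \<in> S \<Longrightarrow> g j \<in> borel_measurable N"
  shows "(\<lambda>w. Max (insert b ((\<lambda>j. g j w) ` S))) \<in> borel_measurable N"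
proof -
  have eq: "insert b ((\<lambda>j. g j w) ` S) = (case_option b (\<lambda>j. g j w)) ` insert None (Some ` S)" for w
    by (auto simp: image_image)
  show ?thesis unfolding eq
    by (rule borel_measurable_Max) (use assms in \<open>auto split: option.splits\<close>)
qed

locale boxp =
  fixes m :: nat and M :: "nat \<Rightarrow> real measure" and c z :: "nat \<Rightarrow> real"
  assumes prob: "\<And>i. i < m \<Longrightarrow> prob_space (M i)"
    and borel: "\<And>i. i < m \<Longrightarrow> sets (M i) = sets borel"
    and intw: "\<And>i. i < m \<Longrightarrow> integrable (M i) (\<lambda>x. x)"
    and prio_int: "\<And>i. i < m \<Longrightarrow> integrable (M i) (\<lambda>x. max (x - z i) 0)"
    and prio: "\<And>i. i < m \<Longrightarrow> (\<integral>x. max (x - z i) 0 \<partial>M i) = c i"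
begin

lemma probPi: "I \<subseteq> {..<m} \<Longrightarrow> prob_space (PiM I M)"
  by (rule prob_space_PiM) (use prob in auto)

lemma coord_meas: "I \<subseteq> {..<m} \<Longrightarrow> j \<in> I \<Longrightarrow> (\<lambda>w. w j) \<in> borel_measurable (PiM I M)"
  using measurable_component_singleton[of j I M] borel[of j]
  by (subst measurable_cong_sets[OF refl borel[symmetric]]) auto

lemma coord_int:
  fixes g :: "real \<Rightarrow> real"
  assumes I: "I \<subseteq> {..<m}" "j \<in> I" and g: "integrable (M j) g"
  shows "integrable (PiM I M) (\<lambda>w. g (w j))" and "(\<integral>w. g (w j) \<partial>PiM I M) = integral\<^sup>L (M j) g"
proof -
  have D: "distr (PiM I M) (M j) (\<lambda>w. w j) = M j"
    by (rule distr_PiM_component) (use I prob in auto)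
  have mj: "(\<lambda>w. w j) \<in> measurable (PiM I M) (M j)"
    using I by (intro measurable_component_singleton) auto
  show "integrable (PiM I M) (\<lambda>w. g (w j))"
    using integrable_distr[OF mj, of g] D g by simp
  show "(\<integral>w. g (w j) \<partial>PiM I M) = integral\<^sup>L (M j) g"
    using integral_distr[OF mj, of g] D g by auto
qed

lemma Phi_meas: "I \<subseteq> {..<m} \<Longrightarrow> Phi z h I \<in> borel_measurable (PiM I M)"
  unfolding Phi_def
  by (rule Max_ins_meas) (auto intro!: borel_measurable_min coord_meas intro: finite_subset)

lemma Phi_int: "I \<subseteq> {..<m} \<Longrightarrow> integrable (PiM I M) (Phi z h I)"
proof -
  assume I: "I \<subseteq> {..<m}"
  have fI: "finite I" using I finite_subset by blast
  interpret B: prob_space "PiM I M" using probPi[OF I] .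
  have "integrable (PiM I M) (\<lambda>w. \<bar>bh h\<bar> + (\<Sum>j\<in>I. \<bar>w j\<bar> + \<bar>z j\<bar>))"
  proof (rule Bochner_Integration.integrable_add[OF B.integrable_const], rule Bochner_Integration.integrable_sum, rule Bochner_Integration.integrable_add[OF _ B.integrable_const])
    fix j assume j: "j \<in> I"
    then have "j < m" using I by auto
    then show "integrable (PiM I M) (\<lambda>w. \<bar>w j\<bar>)"
      using coord_int(1)[OF I j integrable_abs[OF intw]] by simp
  qed
  moreover have "norm (Phi z h I w) \<le> norm (\<bar>bh h\<bar> + (\<Sum>j\<in>I. \<bar>w j\<bar> + \<bar>z j\<bar>))" for w
  proof -
    have "\<bar>Phi z h I w\<bar> \<le> \<bar>bh h\<bar> + (\<Sum>j\<in>I. \<bar>min (w j) (z j)\<bar>)"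
      unfolding Phi_def by (rule Max_ins_bound[OF fI])
    also have "\<dots> \<le> \<bar>bh h\<bar> + (\<Sum>j\<in>I. \<bar>w j\<bar> + \<bar>z j\<bar>)"
      by (intro add_left_mono sum_mono) auto
    finally show ?thesis by (simp add: sum_nonneg)
  qed
  ultimately show ?thesis
    using Bochner_Integration.integrable_bound[OF _ Phi_meas[OF I]] by blast
qed

end

context boxp
begin

lemma run_le_Phi_base:
  assumes "finite U"
  shows "(case s h of Stop a \<Rightarrow> claim_value h (hmerge h w) a | Open i \<Rightarrow> 0) \<le> Phi z h U w"
  using claim_le_bh[of h w] Phi_ge_bh[OF assms, of h z w] bh_nonneg[of h]
  by (auto split: action.splits intro: order_trans)

lemma hmerge_snoc:
  assumes "i \<notin> fst ` set h"
  shows "hmerge h (y(i:=a)) = hmerge (h @ [(i, a)]) y" and "hmerge h (y(i:=a)) i = a"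
proof -
  have n: "map_of h i = None" using assms by (simp add: map_of_eq_None_iff)
  show "hmerge h (y(i:=a)) = hmerge (h @ [(i, a)]) y"
    by (rule ext) (use n in \<open>auto simp: hmerge_def map_of_append map_add_def split: option.splits\<close>)
  show "hmerge h (y(i:=a)) i = a" using n by (simp add: hmerge_def)
qed

lemma weitz:
  "\<forall>h. integrable (PiM ({..<m} - fst ` set h) M) (\<lambda>w. search_run m c s (hmerge h w) k h) \<longrightarrow>
     (\<integral>w. search_run m c s (hmerge h w) k h \<partial>PiM ({..<m} - fst ` set h) M)
       \<le> (\<integral>w. Phi z h ({..<m} - fst ` set h) w \<partial>PiM ({..<m} - fst ` set h) M)"
proof (induction k)
  case 0
  show ?case
  proof (intro allI impI)
    fix h :: "(nat \<times> real) list"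
    let ?U = "{..<m} - fst ` set h"
    assume int: "integrable (PiM ?U M) (\<lambda>w. search_run m c s (hmerge h w) 0 h)"
    show "(\<integral>w. search_run m c s (hmerge h w) 0 h \<partial>PiM ?U M) \<le> (\<integral>w. Phi z h ?U w \<partial>PiM ?U M)"
      by (rule integral_mono[OF int Phi_int]) (use run_le_Phi_base[of ?U] in auto)
  qed
next
  case (Suc k)
  show ?case
  proof (intro allI impI)
    fix h :: "(nat \<times> real) list"
    let ?U = "{..<m} - fst ` set h"
    let ?F = "\<lambda>w. search_run m c s (hmerge h w) (Suc k) h"
    assume int: "integrable (PiM ?U M) ?F"
    have fU: "finite ?U" by auto
    show "(\<integral>w. ?F w \<partial>PiM ?U M) \<le> (\<integral>w. Phi z h ?U w \<partial>PiM ?U M)"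
    proof (cases "\<exists>i. s h = Open i \<and> i < m \<and> i \<notin> fst ` set h")
      case False
      have "?F w \<le> Phi z h ?U w" for w
        using False claim_le_bh[of h w] Phi_ge_bh[OF fU, of h z w] bh_nonneg[of h]
        by (auto split: action.splits intro: order_trans)
      then show ?thesis by (intro integral_mono[OF int Phi_int]) auto
    next
      case True
      then obtain i where si: "s h = Open i" and im: "i < m" and ih: "i \<notin> fst ` set h" by blast
      define I where "I = ?U - {i}"
      have UI: "?U = insert i I" and iI: "i \<notin> I" and Isub: "I \<subseteq> {..<m}" and fI: "finite I"
        using im ih by (auto simp: I_def)
      have Ia: "{..<m} - fst ` set (h @ [(i, a)]) = I" for a by (auto simp: I_def)
      have PI: "\<forall>j\<in>I. prob_space (M j)" using Isub prob by auto
      have Pi: "prob_space (M i)" using prob im by auto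
      interpret A: prob_space "M i" by (rule Pi)
      interpret B: prob_space "PiM I M" by (rule probPi[OF Isub])
      have Fsimp: "?F (y(i:=a)) = - c i + search_run m c s (hmerge (h @ [(i, a)]) y) k (h @ [(i, a)])" for y a
        using si im ih hmerge_snoc[OF ih, of y a] by simp
      have intU: "integrable (PiM (insert i I) M) ?F" using int UI by simp
      note fb = fubini_insert[OF PI Pi intU]
      have intPhi: "integrable (PiM (insert i I) M) (Phi z h ?U)" using Phi_int[of ?U h] im Isub by (simp add: UI)
      note gb = fubini_insert[OF PI Pi intPhi]
      have PhiU: "Phi z h ?U (y(i:=a)) = max (min a (z i)) (Phi z h I y)" for y a
        unfolding UI using Phi_upd[OF fI iI] by simp
      have AEb: "AE a in M i. (\<integral>y. ?F (y(i:=a)) \<partial>PiM I M)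
                   \<le> (\<integral>y. Phi z h ?U (y(i:=a)) \<partial>PiM I M) + (max (a - z i) 0 - c i)"
        using fb(1)
      proof eventually_elim
        case (elim a)
        let ?G = "\<lambda>y. search_run m c s (hmerge (h @ [(i, a)]) y) k (h @ [(i, a)])"
        have "integrable (PiM I M) (\<lambda>y. ?F (y(i:=a)) + c i)"
          by (rule Bochner_Integration.integrable_add[OF elim B.integrable_const])
        then have intG: "integrable (PiM I M) ?G" by (simp only: Fsimp) simp
        have IH: "(\<integral>y. ?G y \<partial>PiM I M) \<le> (\<integral>y. Phi z (h @ [(i, a)]) I y \<partial>PiM I M)"
          using Suc.IH[rule_format, of "h @ [(i, a)]"] intG unfolding Ia by simp
        have eqF: "(\<integral>y. ?F (y(i:=a)) \<partial>PiM I M) = - c i + (\<integral>y. ?G y \<partial>PiM I M)"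
          using intG by (simp only: Fsimp) (simp add: B.prob_space)
        have i1: "integrable (PiM I M) (Phi z (h @ [(i, a)]) I)" by (rule Phi_int[OF Isub])
        have i2: "integrable (PiM I M) (\<lambda>y. Phi z (h @ [(i, min a (z i))]) I y + max (a - z i) 0)"
          by (rule Bochner_Integration.integrable_add[OF Phi_int[OF Isub] B.integrable_const])
        have "(\<integral>y. Phi z (h @ [(i, a)]) I y \<partial>PiM I M)
              \<le> (\<integral>y. Phi z (h @ [(i, min a (z i))]) I y + max (a - z i) 0 \<partial>PiM I M)"
          by (rule integral_mono[OF i1 i2]) (auto simp: Phi_snoc[OF fI])
        also have "\<dots> = (\<integral>y. Phi z h ?U (y(i:=a)) \<partial>PiM I M) + max (a - z i) 0"
        proof -
          have int3: "integrable (PiM I M) (\<lambda>y. max (min a (z i)) (Phi z h I y))"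
            using Phi_int[OF Isub, of "h @ [(i, min a (z i))]"]
              ext[of "Phi z (h @ [(i, min a (z i))]) I" "\<lambda>y. max (min a (z i)) (Phi z h I y)", OF Phi_snoc[OF fI]]
            by simp
          show ?thesis unfolding PhiU Phi_snoc[OF fI]
            by (subst Bochner_Integration.integral_add[OF int3 B.integrable_const]) (simp add: B.prob_space)
        qed
        finally show ?case using IH eqF by simp
      qed
      have "(\<integral>w. ?F w \<partial>PiM ?U M) = (\<integral>a. (\<integral>y. ?F (y(i:=a)) \<partial>PiM I M) \<partial>M i)"
        using fb(3) UI by simp
      also have "\<dots> \<le> (\<integral>a. (\<integral>y. Phi z h ?U (y(i:=a)) \<partial>PiM I M) + (max (a - z i) 0 - c i) \<partial>M i)"
      proof (rule integral_mono_AE[OF fb(2) _ AEb])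
        show "integrable (M i) (\<lambda>a. (\<integral>y. Phi z h ?U (y(i:=a)) \<partial>PiM I M) + (max (a - z i) 0 - c i))"
          by (intro Bochner_Integration.integrable_add Bochner_Integration.integrable_diff gb(2) prio_int im A.integrable_const)
      qed
      also have "\<dots> = (\<integral>a. (\<integral>y. Phi z h ?U (y(i:=a)) \<partial>PiM I M) \<partial>M i) + ((\<integral>a. max (a - z i) 0 \<partial>M i) - c i)"
        using gb(2) prio_int[OF im] by (simp add: A.prob_space)
      also have "\<dots> = (\<integral>w. Phi z h ?U w \<partial>PiM ?U M)"
        using gb(3) UI prio[OF im] by simp
      finally show ?thesis .
    qed
  qed
qed

end

lemma thr_upd: "i \<notin> set is \<Longrightarrow> threshold_run c z X is (w(i:=a)) = threshold_run c z X is w"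
  by (induction "is") auto

lemma thr_bound: "distinct is \<Longrightarrow> \<bar>threshold_run c z X is w\<bar> \<le> (\<Sum>j\<in>set is. \<bar>c j\<bar> + \<bar>w j\<bar>)"
proof (induction "is")
  case Nil then show ?case by simp
next
  case (Cons i "is")
  have IH: "\<bar>threshold_run c z X is w\<bar> \<le> (\<Sum>j\<in>set is. \<bar>c j\<bar> + \<bar>w j\<bar>)" using Cons by simp
  have S: "(\<Sum>j\<in>set (i # is). \<bar>c j\<bar> + \<bar>w j\<bar>) = \<bar>c i\<bar> + \<bar>w i\<bar> + (\<Sum>j\<in>set is. \<bar>c j\<bar> + \<bar>w j\<bar>)"
    using Cons.prems by simp
  have nn: "0 \<le> (\<Sum>j\<in>set is. \<bar>c j\<bar> + \<bar>w j\<bar>)" by (intro sum_nonneg) auto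
  show ?case unfolding S using IH nn by (auto simp: abs_if split: if_splits)
qed

context boxp
begin

lemma thr_meas:
  assumes "set is \<subseteq> J" "J \<subseteq> {..<m}"
  shows "threshold_run c z {T<..} is \<in> borel_measurable (PiM J M)"
  using assms(1)
proof (induction "is")
  case Nil then show ?case by simp
next
  case (Cons i "is")
  have [measurable]: "(\<lambda>w. w i) \<in> borel_measurable (PiM J M)"
    using Cons.prems assms(2) by (intro coord_meas) auto
  have [measurable]: "threshold_run c z {T<..} is \<in> borel_measurable (PiM J M)"
    using Cons by auto
  have eq: "threshold_run c z {T<..} (i # is) = (\<lambda>w. if T < z i then - c i + (if T < w i then w i else threshold_run c z {T<..} is w)
      else threshold_run c z {T<..} is w)"
    by (rule ext) simp
  show ?case unfolding eq by measurable
qed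

lemma thr_int:
  assumes "distinct is" "set is \<subseteq> J" "J \<subseteq> {..<m}"
  shows "integrable (PiM J M) (threshold_run c z {T<..} is)"
proof -
  interpret B: prob_space "PiM J M" by (rule probPi[OF assms(3)])
  have "integrable (PiM J M) (\<lambda>w. \<Sum>j\<in>set is. \<bar>c j\<bar> + \<bar>w j\<bar>)"
  proof (rule Bochner_Integration.integrable_sum, rule Bochner_Integration.integrable_add[OF B.integrable_const])
    fix j assume j: "j \<in> set is"
    then have "j < m" "j \<in> J" using assms by auto
    then show "integrable (PiM J M) (\<lambda>w. \<bar>w j\<bar>)"
      using coord_int(1)[OF assms(3) _ integrable_abs[OF intw]] by simp
  qed
  moreover have "norm (threshold_run c z {T<..} is w) \<le> norm (\<Sum>j\<in>set is. \<bar>c j\<bar> + \<bar>w j\<bar>)" for w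
    using thr_bound[OF assms(1), of c z "{T<..}" w] by (simp add: sum_nonneg)
  ultimately show ?thesis
    using Bochner_Integration.integrable_bound[OF _ thr_meas[OF assms(2,3)]] by blast
qed

lemma thr_main:
  assumes "distinct is" "set is \<subseteq> {..<m}"
  shows "min T (\<Sum>j\<in>set is. (\<integral>x. max (min x (z j) - T) 0 \<partial>M j))
           \<le> (\<integral>w. threshold_run c z {T<..} is w \<partial>PiM (set is) M)"
  using assms
proof (induction "is")
  case Nil
  interpret B: prob_space "PiM {} M" by (rule probPi) auto
  show ?case by simp
next
  case (Cons i "is")
  define I where "I = set is"
  define S where "S = (\<Sum>j\<in>set is. (\<integral>x. max (min x (z j) - T) 0 \<partial>M j))"
  define ei where "ei = (\<integral>x. max (min x (z i) - T) 0 \<partial>M i)"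
  define R where "R = threshold_run c z {T<..} is"
  define V where "V = (\<integral>w. R w \<partial>PiM I M)"
  have iI: "i \<notin> I" and im: "i < m" and Isub: "I \<subseteq> {..<m}" and dis: "distinct is"
    using Cons.prems by (auto simp: I_def)
  have IH: "min T S \<le> V" using Cons by (simp add: S_def V_def R_def I_def)
  have PI: "\<forall>j\<in>I. prob_space (M j)" using Isub prob by auto
  have Pi: "prob_space (M i)" using prob im by auto
  interpret A: prob_space "M i" by (rule Pi)
  interpret B: prob_space "PiM I M" by (rule probPi[OF Isub])
  have intR: "integrable (PiM I M) R" unfolding R_def by (rule thr_int[OF dis _ Isub]) (simp add: I_def)
  let ?f = "threshold_run c z {T<..} (i # is)"
  have intf: "integrable (PiM (insert i I) M) ?f"
    by (rule thr_int) (use Cons.prems Isub im in \<open>auto simp: I_def\<close>)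
  note fb = fubini_insert[OF PI Pi intf]
  define g0 where "g0 a = (if T < z i then - c i + (if T < a then a else V) else V)" for a
  have inner: "(\<integral>y. ?f (y(i:=a)) \<partial>PiM I M) = g0 a" for a
  proof -
    have "?f (y(i:=a)) = (if T < z i then - c i + (if T < a then a else R y) else R y)" for y
      using iI thr_upd[of i "is" c z "{T<..}" y a] by (simp add: R_def I_def)
    then have "(\<integral>y. ?f (y(i:=a)) \<partial>PiM I M) = (\<integral>y. (if T < z i then - c i + (if T < a then a else R y) else R y) \<partial>PiM I M)"
      by simp
    also have "\<dots> = g0 a"
      using intR by (cases "T < z i"; cases "T < a") (simp_all add: g0_def V_def B.prob_space)
    finally show ?thesis .
  qed
  have intg0: "integrable (M i) g0" using fb(2) unfolding inner by (simp add: fun_eq_iff)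
  have eqV: "(\<integral>w. ?f w \<partial>PiM (insert i I) M) = integral\<^sup>L (M i) g0"
    using fb(3) unfolding inner .
  define h0 where "h0 a = min T S + max (min a (z i) - T) 0 + (if T < z i then max (a - z i) 0 - c i else 0)" for a
  have inte: "integrable (M i) (\<lambda>a. max (min a (z i) - T) 0)"
    by (intro integrable_max integrable_min Bochner_Integration.integrable_diff intw[OF im] A.integrable_const)
  have inth0: "integrable (M i) h0"
  proof (cases "T < z i")
    case True
    then have "h0 = (\<lambda>a. min T S + max (min a (z i) - T) 0 + (max (a - z i) 0 - c i))"
      by (simp add: h0_def fun_eq_iff)
    then show ?thesis
      by (simp only:) (intro Bochner_Integration.integrable_add Bochner_Integration.integrable_diff inte prio_int[OF im] A.integrable_const)
  next
    case False
    then have "h0 = (\<lambda>a. min T S + max (min a (z i) - T) 0 + 0)"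
      by (simp add: h0_def fun_eq_iff)
    then show ?thesis
      by (simp only:) (intro Bochner_Integration.integrable_add inte A.integrable_const)
  qed
  have le: "h0 a \<le> g0 a" for a
    using IH unfolding h0_def g0_def by (auto simp: max_def min_def split: if_splits)
  have ih0: "integral\<^sup>L (M i) h0 = min T S + ei"
  proof (cases "T < z i")
    case True then show ?thesis unfolding h0_def ei_def
      using inte prio_int[OF im] prio[OF im] by (simp add: A.prob_space)
  next
    case False then show ?thesis unfolding h0_def ei_def
      using inte by (simp add: A.prob_space)
  qed
  have ei0: "0 \<le> ei" unfolding ei_def by (rule Bochner_Integration.integral_nonneg) auto
  have "min T (\<Sum>j\<in>set (i # is). (\<integral>x. max (min x (z j) - T) 0 \<partial>M j)) = min T (ei + S)"
    using iI by (simp add: S_def ei_def I_def)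
  also have "\<dots> \<le> min T S + ei" using ei0 by linarith
  also have "\<dots> = integral\<^sup>L (M i) h0" using ih0 by simp
  also have "\<dots> \<le> integral\<^sup>L (M i) g0" by (rule integral_mono[OF inth0 intg0 le])
  also have "\<dots> = (\<integral>w. ?f w \<partial>PiM (set (i # is)) M)" using eqV by (simp add: I_def)
  finally show ?case .
qed

end



context boxp
begin

lemma box_final: "\<exists>X. target_interval X \<and> threshold_value m M c z X \<ge> opt_search_value m M c / 2"
proof -
  let ?U = "{..<m}"
  interpret B: prob_space "PiM ?U M" by (rule probPi) auto
  define EK where "EK = (\<integral>w. Phi z [] ?U w \<partial>PiM ?U M)"
  define T where "T = EK / 2"
  have bh0: "bh [] = 0" by (simp add: bh_def)
  have EK0: "0 \<le> EK" unfolding EK_def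
    using Phi_ge_bh[of ?U "[]" z] bh0 by (intro Bochner_Integration.integral_nonneg) auto
  have hm0: "hmerge [] w = w" for w by (simp add: hmerge_def fun_eq_iff)
  have opt: "opt_search_value m M c \<le> EK"
    unfolding opt_search_value_def
  proof (rule cSUP_least)
    have "search_value m c (\<lambda>_. Stop None) = (\<lambda>w. 0)"
      by (cases m) (simp_all add: search_value_def claim_value_def fun_eq_iff)
    then have "integrable (PiM ?U M) (search_value m c (\<lambda>_. Stop None))" by simp
    then show "{s. integrable (PiM ?U M) (search_value m c s)} \<noteq> {}" by blast
  next
    fix s assume "s \<in> {s. integrable (PiM ?U M) (search_value m c s)}"
    then have int0: "integrable (PiM ?U M) (search_value m c s)" by simp
    have sv: "search_value m c s = (\<lambda>w. search_run m c s (hmerge [] w) m [])"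
      by (simp add: fun_eq_iff search_value_def hm0)
    have U0: "{..<m} - fst ` set ([] :: (nat \<times> real) list) = ?U" by simp
    have W: "integrable (PiM ?U M) (\<lambda>w. search_run m c s (hmerge [] w) m []) \<longrightarrow>
     (\<integral>w. search_run m c s (hmerge [] w) m [] \<partial>PiM ?U M)
       \<le> (\<integral>w. Phi z [] ?U w \<partial>PiM ?U M)"
      using spec[OF weitz[of s m], of "[]"] by (simp only: U0)
    show "(\<integral>w. search_value m c s w \<partial>PiM ?U M) \<le> EK"
      using W int0 unfolding sv EK_def by (rule mp)
  qed
  have T0: "0 \<le> T" using EK0 by (simp add: T_def)
  let ?e = "\<lambda>j. (\<integral>x. max (min x (z j) - T) 0 \<partial>M j)"
  have inte: "integrable (M j) (\<lambda>x. max (min x (z j) - T) 0)" if "j < m" for j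
  proof -
    interpret A: prob_space "M j" using prob that .
    show ?thesis
      by (intro integrable_max integrable_min Bochner_Integration.integrable_diff intw[OF that] A.integrable_const)
  qed
  have intej: "integrable (PiM ?U M) (\<lambda>w. max (min (w j) (z j) - T) 0)" if "j < m" for j
    using coord_int(1)[OF _ _ inte[OF that]] that by simp
  have sumeq: "(\<Sum>j\<in>?U. ?e j) = (\<integral>w. (\<Sum>j\<in>?U. max (min (w j) (z j) - T) 0) \<partial>PiM ?U M)"
  proof -
    have "(\<integral>w. (\<Sum>j\<in>?U. max (min (w j) (z j) - T) 0) \<partial>PiM ?U M)
        = (\<Sum>j\<in>?U. (\<integral>w. max (min (w j) (z j) - T) 0 \<partial>PiM ?U M))"
      by (rule Bochner_Integration.integral_sum) (rule intej, simp)
    also have "\<dots> = (\<Sum>j\<in>?U. ?e j)"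
      by (rule sum.cong[OF refl], rule coord_int(2)[OF _ _ inte]) auto
    finally show ?thesis by simp
  qed
  have pw: "Phi z [] ?U w - T \<le> (\<Sum>j\<in>?U. max (min (w j) (z j) - T) 0)" for w
  proof -
    have nn: "0 \<le> (\<Sum>j\<in>?U. max (min (w j) (z j) - T) 0)" by (intro sum_nonneg) auto
    have "Phi z [] ?U w \<in> insert 0 ((\<lambda>j. min (w j) (z j)) ` ?U)"
      unfolding Phi_def bh0 by (intro Max_in) auto
    then show ?thesis
    proof
      assume "Phi z [] ?U w = 0" then show ?thesis using nn T0 by simp
    next
      assume "Phi z [] ?U w \<in> (\<lambda>j. min (w j) (z j)) ` ?U"
      then obtain j where j: "j < m" "Phi z [] ?U w = min (w j) (z j)" by auto
      have "max (min (w j) (z j) - T) 0 \<le> (\<Sum>j\<in>?U. max (min (w j) (z j) - T) 0)"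
        using j by (intro member_le_sum) auto
      then show ?thesis using j by simp
    qed
  qed
  have "EK - T = (\<integral>w. Phi z [] ?U w - T \<partial>PiM ?U M)"
    unfolding EK_def by (subst Bochner_Integration.integral_diff[OF Phi_int B.integrable_const]) (simp_all add: B.prob_space)
  also have "\<dots> \<le> (\<Sum>j\<in>?U. ?e j)" unfolding sumeq
    by (rule integral_mono[OF Bochner_Integration.integrable_diff[OF Phi_int B.integrable_const]
          Bochner_Integration.integrable_sum pw]) (simp_all add: intej)
  finally have Se: "T \<le> (\<Sum>j\<in>?U. ?e j)" by (simp add: T_def)
  have setU: "set [0..<m] = ?U" by (simp add: atLeast0LessThan)
  have thr: "min T (\<Sum>j\<in>set [0..<m]. ?e j) \<le> (\<integral>w. threshold_run c z {T<..} [0..<m] w \<partial>PiM (set [0..<m]) M)"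
    by (rule thr_main) (simp_all only: setU distinct_upt subset_refl)
  have thT: "threshold_value m M c z {T<..} \<ge> T"
    using thr Se unfolding threshold_value_def setU by linarith
  moreover have "target_interval {T<..}" unfolding target_interval_def by blast
  moreover have "opt_search_value m M c / 2 \<le> threshold_value m M c z {T<..}"
      using opt thT unfolding T_def by linarith
  ultimately show ?thesis by blast
qed

end


theorem mainTheorem3:
  fixes m :: nat and M :: "nat \<Rightarrow> real measure" and c z :: "nat \<Rightarrow> real"
  assumes prob: "\<And>i. i < m \<Longrightarrow> prob_space (M i)"
    and borel: "\<And>i. i < m \<Longrightarrow> sets (M i) = sets borel"
    and nonneg: "\<And>i. i < m \<Longrightarrow> AE x in M i. 0 \<le> x"
    and cost: "\<And>i. i < m \<Longrightarrow> 0 \<le> c i"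
    and prio_int: "\<And>i. i < m \<Longrightarrow> integrable (M i) (\<lambda>x. max (x - z i) 0)"
    and prio: "\<And>i. i < m \<Longrightarrow> (\<integral>x. max (x - z i) 0 \<partial>M i) = c i"
  shows "\<exists>X. target_interval X \<and> threshold_value m M c z X \<ge> opt_search_value m M c / 2"
proof -
  have intw: "integrable (M i) (\<lambda>x. x)" if im: "i < m" for i
  proof -
    interpret A: prob_space "M i" using prob im .
    have bnd: "integrable (M i) (\<lambda>x. max (x - z i) 0 + \<bar>z i\<bar>)"
      by (intro Bochner_Integration.integrable_add prio_int[OF im] A.integrable_const)
    have meas: "(\<lambda>x. x) \<in> borel_measurable (M i)"
      by (subst measurable_cong_sets[OF borel[OF im] refl]) auto
    have "AE x in M i. norm x \<le> norm (max (x - z i) 0 + \<bar>z i\<bar>)"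
      using nonneg[OF im]
    proof eventually_elim
      case (elim x)
      have "0 \<le> max (x - z i) 0 + \<bar>z i\<bar>" by simp
      moreover have "x \<le> max (x - z i) 0 + \<bar>z i\<bar>" by (cases "x \<le> z i") auto
      ultimately show ?case using elim by simp
    qed
    then show ?thesis using Bochner_Integration.integrable_bound[OF bnd meas] by blast
  qed
  interpret boxp m M c z
    by (rule boxp.intro) (erule prob, erule borel, erule intw, erule prio_int, erule prio)
  show ?thesis by (rule box_final)
qed

end
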